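(* Let $n\ge3$, let $H$ be a non-trivial finitely generated abelian group, let $G$ be a group with a surjective homomorphism $\sigma\colon G\to S_n$, and let $W=H\wr_\sigma G=H^n\rtimes_\sigma G$. Assume that every abelian normal subgroup of $W$ is contained in $H^n$. If $G$ has the $R_\infty$-property, then $W$ has the $R_\infty$-property.
   Context: $H\wr_\sigma G=H^n\rtimes_\sigma G$ is the semidirect product in which $G$ acts on $H^n$ by permuting coordinates through $\sigma$: $g\cdot(h_1,\dots,h_n)=(h_{\sigma(g)(1)},\dots,h_{\sigma(g)(n)})$ (with the composition convention in $S_n$ making this a left action); $H^n$ is identified with $\{(\mathbf h,1)\}$. For an automorphism $\varphi$ of a group $X$, elements $x,y\in X$ are $\varphi$-twisted conjugate if $x=zy\varphi(z)^{-1}$ for some $z\in X$; the number of equivalence classes is the Reidemeister number $R(\varphi)\in\mathbb N\cup\{\infty\}$. $X$ has the $R_\infty$-property if $R(\varphi)=\infty$ for every $\varphi\in\mathrm{Aut}(X)$. *)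

theory Defs
  imports "HOL-Algebra.Algebra"
begin

text \<open>The paper's action (g.h)_i = h_{sigma(g)(i)} uses the opposite composition convention in S_n;
  translated to the usual convention it reads (g.h)_i = h_{(sigma g)^{-1}(i)}.\<close>

definition perm_act :: "('g \<Rightarrow> nat \<Rightarrow> nat) \<Rightarrow> nat \<Rightarrow> 'g \<Rightarrow> (nat \<Rightarrow> 'h) \<Rightarrow> (nat \<Rightarrow> 'h)"
  where "perm_act \<sigma> n g a = (\<lambda>i\<in>{1..n}. a (inv_into UNIV (\<sigma> g) i))"

definition wreath ::
  "('h, 'm) monoid_scheme \<Rightarrow> ('g, 'k) monoid_scheme \<Rightarrow> nat \<Rightarrow> ('g \<Rightarrow> nat \<Rightarrow> nat)
    \<Rightarrow> ((nat \<Rightarrow> 'h) \<times> 'g) monoid"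
  where "wreath H G n \<sigma> =
    \<lparr> carrier = (\<Pi>\<^sub>E i\<in>{1..n}. carrier H) \<times> carrier G,
      monoid.mult = (\<lambda>(a, g) (b, k).
                ((\<lambda>i\<in>{1..n}. a i \<otimes>\<^bsub>H\<^esub> perm_act \<sigma> n g b i), g \<otimes>\<^bsub>G\<^esub> k)),
      one = ((\<lambda>i\<in>{1..n}. \<one>\<^bsub>H\<^esub>), \<one>\<^bsub>G\<^esub>) \<rparr>"

definition wreath_base ::
  "('h, 'm) monoid_scheme \<Rightarrow> ('g, 'k) monoid_scheme \<Rightarrow> nat \<Rightarrow> ((nat \<Rightarrow> 'h) \<times> 'g) set"
  where "wreath_base H G n = (\<Pi>\<^sub>E i\<in>{1..n}. carrier H) \<times> {\<one>\<^bsub>G\<^esub>}"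

definition twisted_conj :: "('a, 'b) monoid_scheme \<Rightarrow> ('a \<Rightarrow> 'a) \<Rightarrow> ('a \<times> 'a) set"
  where "twisted_conj K \<phi> = {(x, y). x \<in> carrier K \<and> y \<in> carrier K \<and>
           (\<exists>z\<in>carrier K. x = monoid.mult K (monoid.mult K z y) (m_inv K (\<phi> z)))}"

definition reidemeister_infinite :: "('a, 'b) monoid_scheme \<Rightarrow> ('a \<Rightarrow> 'a) \<Rightarrow> bool"
  where "reidemeister_infinite K \<phi> = infinite (carrier K // twisted_conj K \<phi>)"

definition R_infty :: "('a, 'b) monoid_scheme \<Rightarrow> bool"
  where "R_infty K = (\<forall>\<phi>\<in>iso K K. reidemeister_infinite K \<phi>)"

definition fin_gen_group :: "('a, 'b) monoid_scheme \<Rightarrow> bool"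
  where "fin_gen_group K = (\<exists>S. finite S \<and> S \<subseteq> carrier K \<and> generate K S = carrier K)"

end

theory Submission
  imports Defs
begin

locale wr =
  fixes H :: "('h, 'm) monoid_scheme" and G :: "('g, 'k) monoid_scheme"
    and n :: nat and \<sigma> :: "'g \<Rightarrow> nat \<Rightarrow> nat"
  assumes H: "comm_group H" and G: "group G" and sig: "\<sigma> \<in> hom G (sym_group n)"
begin

abbreviation "W \<equiv> wreath H G n \<sigma>"
abbreviation "E \<equiv> (\<Pi>\<^sub>E i\<in>{1..n}. carrier H)"
abbreviation "P g \<equiv> perm_act \<sigma> n g"

lemma gh: "group_hom G (sym_group n) \<sigma>"
  using G sig sym_group_is_group by (simp add: group_hom_def group_hom_axioms_def)

lemma sperm: "g \<in> carrier G \<Longrightarrow> \<sigma> g permutes {1..n}"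
  using sig by (auto simp: hom_def sym_group_carrier)

lemma sinv_in: "g \<in> carrier G \<Longrightarrow> i \<in> {1..n} \<Longrightarrow> inv_into UNIV (\<sigma> g) i \<in> {1..n}"
  using permutes_in_image[OF permutes_inv[OF sperm]] by blast

lemma P_mem: "g \<in> carrier G \<Longrightarrow> a \<in> E \<Longrightarrow> P g a \<in> E"
  unfolding perm_act_def using sinv_in by auto

lemma P_comp: assumes "g \<in> carrier G" "k \<in> carrier G"
  shows "P g (P k c) = P (g \<otimes>\<^bsub>G\<^esub> k) c"
proof -
  have "\<sigma> (g \<otimes>\<^bsub>G\<^esub> k) = \<sigma> g \<circ> \<sigma> k" using sig assms by (simp add: hom_def sym_group_mult)
  then have "inv_into UNIV (\<sigma> (g \<otimes>\<^bsub>G\<^esub> k)) = inv_into UNIV (\<sigma> k) \<circ> inv_into UNIV (\<sigma> g)"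
    using o_inv_distrib permutes_bij sperm assms by metis
  then show ?thesis unfolding perm_act_def using sinv_in[OF assms(1)] by (auto simp: fun_eq_iff)
qed

lemma P_one: "a \<in> E \<Longrightarrow> P \<one>\<^bsub>G\<^esub> a = a"
proof -
  have "\<sigma> \<one>\<^bsub>G\<^esub> = id" using group_hom.hom_one[OF gh] by (simp add: sym_group_one)
  then have "inv_into UNIV (\<sigma> \<one>\<^bsub>G\<^esub>) = id" by (simp add: inv_id)
  then show "a \<in> E \<Longrightarrow> ?thesis" unfolding perm_act_def by (simp add: PiE_restrict)
qed

lemma P_apply: "g \<in> carrier G \<Longrightarrow> i \<in> {1..n} \<Longrightarrow> P g a i = a (inv_into UNIV (\<sigma> g) i)"
  unfolding perm_act_def by simp

lemma W_carrier: "carrier W = E \<times> carrier G"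
  by (simp add: wreath_def)
lemma W_mult: "(a, g) \<otimes>\<^bsub>W\<^esub> (b, k) = ((\<lambda>i\<in>{1..n}. a i \<otimes>\<^bsub>H\<^esub> P g b i), g \<otimes>\<^bsub>G\<^esub> k)"
  by (simp add: wreath_def)
lemma W_one: "\<one>\<^bsub>W\<^esub> = ((\<lambda>i\<in>{1..n}. \<one>\<^bsub>H\<^esub>), \<one>\<^bsub>G\<^esub>)"
  by (simp add: wreath_def)

lemma W_group: "group W"
proof (rule groupI)
  interpret H: comm_group H by (rule H)
  interpret G: group G by (rule G)
  show "x \<otimes>\<^bsub>W\<^esub> y \<in> carrier W" if "x \<in> carrier W" "y \<in> carrier W" for x y
  proof -
    obtain a g b k where xy: "x = (a,g)" "y = (b,k)" by (metis prod.exhaust)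
    with that have m: "a \<in> E" "b \<in> E" "g \<in> carrier G" "k \<in> carrier G"
      by (auto simp: W_carrier)
    have "P g b \<in> E" using P_mem m by blast
    then have "(\<lambda>i\<in>{1..n}. a i \<otimes>\<^bsub>H\<^esub> P g b i) \<in> E"
      using m(1) unfolding restrict_PiE_iff by (blast intro: H.m_closed PiE_mem)
    then show ?thesis using m by (simp add: xy W_mult W_carrier)
  qed
  show "\<one>\<^bsub>W\<^esub> \<in> carrier W" by (auto simp: W_carrier W_one)
  show "x \<otimes>\<^bsub>W\<^esub> y \<otimes>\<^bsub>W\<^esub> z = x \<otimes>\<^bsub>W\<^esub> (y \<otimes>\<^bsub>W\<^esub> z)"
    if "x \<in> carrier W" "y \<in> carrier W" "z \<in> carrier W" for x y z
  proof -
    obtain a g b k c l where xyz: "x = (a,g)" "y = (b,k)" "z = (c,l)" by (metis prod.exhaust)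
    with that have m: "a \<in> E" "b \<in> E" "c \<in> E" "g \<in> carrier G" "k \<in> carrier G" "l \<in> carrier G"
      by (auto simp: W_carrier)
    have PH: "\<And>g a. g \<in> carrier G \<Longrightarrow> a \<in> E \<Longrightarrow> i \<in> {1..n} \<Longrightarrow> P g a i \<in> carrier H" for i
      using P_mem by blast
    have "(a i \<otimes>\<^bsub>H\<^esub> P g b i) \<otimes>\<^bsub>H\<^esub> P (g \<otimes>\<^bsub>G\<^esub> k) c i
        = a i \<otimes>\<^bsub>H\<^esub> P g (\<lambda>j\<in>{1..n}. b j \<otimes>\<^bsub>H\<^esub> P k c j) i" if i: "i \<in> {1..n}" for i
    proof -
      have j: "inv_into UNIV (\<sigma> g) i \<in> {1..n}" using sinv_in[OF m(4) i] .
      have "P g (\<lambda>j\<in>{1..n}. b j \<otimes>\<^bsub>H\<^esub> P k c j) i = P g b i \<otimes>\<^bsub>H\<^esub> P g (P k c) i"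
        using j i m(4) by (simp add: P_apply)
      also have "\<dots> = P g b i \<otimes>\<^bsub>H\<^esub> P (g \<otimes>\<^bsub>G\<^esub> k) c i" by (simp only: P_comp[OF m(4,5)])
      moreover have "a i \<in> carrier H" using m(1) i by (rule PiE_mem)
      moreover have "P g b i \<in> carrier H" using PH[OF m(4) m(2) i] .
      moreover have "P (g \<otimes>\<^bsub>G\<^esub> k) c i \<in> carrier H" using PH[OF G.m_closed[OF m(4,5)] m(3) i] .
      ultimately show ?thesis by (simp add: H.m_assoc)
    qed
    note eq = this
    have L: "x \<otimes>\<^bsub>W\<^esub> y \<otimes>\<^bsub>W\<^esub> z = ((\<lambda>i\<in>{1..n}. (a i \<otimes>\<^bsub>H\<^esub> P g b i) \<otimes>\<^bsub>H\<^esub> P (g \<otimes>\<^bsub>G\<^esub> k) c i), g \<otimes>\<^bsub>G\<^esub> k \<otimes>\<^bsub>G\<^esub> l)"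
      unfolding xyz W_mult by (auto intro!: restrict_ext)
    have R: "x \<otimes>\<^bsub>W\<^esub> (y \<otimes>\<^bsub>W\<^esub> z) = ((\<lambda>i\<in>{1..n}. a i \<otimes>\<^bsub>H\<^esub> P g (\<lambda>j\<in>{1..n}. b j \<otimes>\<^bsub>H\<^esub> P k c j) i), g \<otimes>\<^bsub>G\<^esub> (k \<otimes>\<^bsub>G\<^esub> l))"
      unfolding xyz W_mult by (auto intro!: restrict_ext)
    have "(\<lambda>i\<in>{1..n}. (a i \<otimes>\<^bsub>H\<^esub> P g b i) \<otimes>\<^bsub>H\<^esub> P (g \<otimes>\<^bsub>G\<^esub> k) c i) = (\<lambda>i\<in>{1..n}. a i \<otimes>\<^bsub>H\<^esub> P g (\<lambda>j\<in>{1..n}. b j \<otimes>\<^bsub>H\<^esub> P k c j) i)"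
      by (rule restrict_ext) (rule eq)
    then show ?thesis unfolding L R using m by (simp add: G.m_assoc)
  qed
  show "\<one>\<^bsub>W\<^esub> \<otimes>\<^bsub>W\<^esub> x = x" if "x \<in> carrier W" for x
  proof -
    obtain a g where x: "x = (a,g)" by (metis prod.exhaust)
    with that have m: "a \<in> E" "g \<in> carrier G" by (auto simp: W_carrier)
    have "(\<lambda>i\<in>{1..n}. (\<lambda>i\<in>{1..n}. \<one>\<^bsub>H\<^esub>) i \<otimes>\<^bsub>H\<^esub> a i) = (\<lambda>i\<in>{1..n}. a i)"
      by (rule restrict_ext) (simp add: H.l_one[OF PiE_mem[OF m(1)]])
    also have "\<dots> = a" using m(1) by (rule PiE_restrict)
    finally have e: "(\<lambda>i\<in>{1..n}. (\<lambda>i\<in>{1..n}. \<one>\<^bsub>H\<^esub>) i \<otimes>\<^bsub>H\<^esub> a i) = a" .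
    show ?thesis unfolding x W_one W_mult P_one[OF m(1)] e using m(2) by simp
  qed
  show "\<exists>y\<in>carrier W. y \<otimes>\<^bsub>W\<^esub> x = \<one>\<^bsub>W\<^esub>" if "x \<in> carrier W" for x
  proof -
    obtain a g where x: "x = (a,g)" by (metis prod.exhaust)
    with that have m: "a \<in> E" "g \<in> carrier G" by (auto simp: W_carrier)
    let ?k = "inv\<^bsub>G\<^esub> g"
    let ?y = "(\<lambda>i\<in>{1..n}. inv\<^bsub>H\<^esub> (P ?k a i), ?k)"
    have "P ?k a \<in> E" using P_mem m by simp
    then have "?y \<in> carrier W" by (auto simp: W_carrier m)
    moreover have "?y \<otimes>\<^bsub>W\<^esub> x = \<one>\<^bsub>W\<^esub>"
      using \<open>P ?k a \<in> E\<close> m by (auto simp: x W_mult W_one fun_eq_iff PiE_iff)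
    ultimately show ?thesis by blast
  qed
qed



abbreviation "B \<equiv> wreath_base H G n"
abbreviation "one_v \<equiv> (\<lambda>i\<in>{1..n}. \<one>\<^bsub>H\<^esub>)"

lemma one_v_E: "one_v \<in> E"
  using comm_group.axioms(1)[OF H] by (auto intro: monoid.one_closed simp: comm_monoid_def group_def)

lemma snd_hom: "snd \<in> hom W G"
  by (auto simp: hom_def W_carrier wreath_def)

lemma snd_gh: "group_hom W G snd"
  using W_group G snd_hom by (simp add: group_hom_def group_hom_axioms_def)

lemma snd_surj: "snd ` carrier W = carrier G"
proof
  show "snd ` carrier W \<subseteq> carrier G" by (auto simp: W_carrier)
  show "carrier G \<subseteq> snd ` carrier W"
  proof
    fix g assume "g \<in> carrier G"
    then have "(one_v, g) \<in> carrier W" using one_v_E by (simp add: W_carrier)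
    then show "g \<in> snd ` carrier W" by force
  qed
qed

lemma B_kernel: "B = kernel W G snd"
  by (auto simp: wreath_base_def kernel_def W_carrier intro: monoid.one_closed[OF group.is_monoid[OF G]])

lemma B_normal: "B \<lhd> W"
  using group_hom.normal_kernel[OF snd_gh] B_kernel by simp

lemma B_comm: "\<forall>x\<in>B. \<forall>y\<in>B. x \<otimes>\<^bsub>W\<^esub> y = y \<otimes>\<^bsub>W\<^esub> x"
proof (intro ballI)
  interpret H: comm_group H by (rule H)
  fix x y assume "x \<in> B" "y \<in> B"
  then obtain a b where x: "x = (a, \<one>\<^bsub>G\<^esub>)" "y = (b, \<one>\<^bsub>G\<^esub>)" "a \<in> E" "b \<in> E"
    by (auto simp: wreath_base_def)
  then show "x \<otimes>\<^bsub>W\<^esub> y = y \<otimes>\<^bsub>W\<^esub> x"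
    by (auto simp: W_mult P_one fun_eq_iff PiE_iff H.m_comm)
qed

lemma char:
  assumes ass: "\<forall>N. N \<lhd> W \<and> (\<forall>x\<in>N. \<forall>y\<in>N. x \<otimes>\<^bsub>W\<^esub> y = y \<otimes>\<^bsub>W\<^esub> x) \<longrightarrow> N \<subseteq> B"
    and phi: "\<phi> \<in> iso W W"
  shows "\<phi> ` B \<subseteq> B"
proof -
  have gh: "group_hom W W \<phi>" using phi W_group
    by (simp add: group_hom_def group_hom_axioms_def iso_def)
  have surj: "\<phi> ` carrier W = carrier W" using phi by (simp add: iso_def bij_betw_def)
  have "\<phi> ` B \<lhd> W" using normal.surj_hom_normal_subgroup[OF B_normal gh surj] .
  moreover have "\<forall>x\<in>\<phi> ` B. \<forall>y\<in>\<phi> ` B. x \<otimes>\<^bsub>W\<^esub> y = y \<otimes>\<^bsub>W\<^esub> x"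
  proof (intro ballI)
    fix x y assume "x \<in> \<phi> ` B" "y \<in> \<phi> ` B"
    then obtain u v where uv: "u \<in> B" "v \<in> B" "x = \<phi> u" "y = \<phi> v" by blast
    have "u \<in> carrier W" "v \<in> carrier W" using uv B_kernel by (auto simp: kernel_def)
    then show "x \<otimes>\<^bsub>W\<^esub> y = y \<otimes>\<^bsub>W\<^esub> x" using uv B_comm
      by (metis group_hom.hom_mult[OF gh])
  qed
  ultimately show ?thesis using ass by blast
qed


lemma main:
  assumes ass: "\<forall>N. N \<lhd> W \<and> (\<forall>x\<in>N. \<forall>y\<in>N. x \<otimes>\<^bsub>W\<^esub> y = y \<otimes>\<^bsub>W\<^esub> x) \<longrightarrow> N \<subseteq> B"
    and phi: "\<phi> \<in> iso W W" and RG: "R_infty G"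
  shows "reidemeister_infinite W \<phi>"
proof -
  interpret Wg: group W by (rule W_group)
  interpret G: group G by (rule G)
  interpret S: group_hom W G snd by (rule snd_gh)
  have gh: "group_hom W W \<phi>" using phi W_group
    by (simp add: group_hom_def group_hom_axioms_def iso_def)
  interpret F: group_hom W W \<phi> by (rule gh)
  have surj: "\<phi> ` carrier W = carrier W" using phi by (simp add: iso_def bij_betw_def)
  have injp: "inj_on \<phi> (carrier W)" using phi by (simp add: iso_def bij_betw_def)
  have c1: "\<phi> ` B \<subseteq> B" by (rule char[OF ass phi])
  have c2: "inv_into (carrier W) \<phi> ` B \<subseteq> B" by (rule char[OF ass Wg.iso_set_sym[OF phi]])
  have BW: "B \<subseteq> carrier W" using B_kernel by (auto simp: kernel_def)
  have Bsub: "B \<subseteq> \<phi> ` B"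
  proof
    fix b assume b: "b \<in> B"
    then have "\<phi> (inv_into (carrier W) \<phi> b) = b" using BW surj by (metis f_inv_into_f subsetD)
    then show "b \<in> \<phi> ` B" using c2 b by (metis image_eqI subsetD image_subset_iff)
  qed
  define sg where "sg g = (one_v, g)" for g :: 'g
  define \<psi> where "\<psi> g = snd (\<phi> (sg g))" for g
  have sg_mem: "g \<in> carrier G \<Longrightarrow> sg g \<in> carrier W" for g
    using one_v_E by (simp add: sg_def W_carrier)
  have Pone: "g \<in> carrier G \<Longrightarrow> i \<in> {1..n} \<Longrightarrow> P g one_v i = \<one>\<^bsub>H\<^esub>" for g i
    using sinv_in by (simp add: P_apply)
  interpret H: comm_group H by (rule H)
  have sg_mult: "g \<in> carrier G \<Longrightarrow> k \<in> carrier G \<Longrightarrow> sg g \<otimes>\<^bsub>W\<^esub> sg k = sg (g \<otimes>\<^bsub>G\<^esub> k)" for g k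
  proof -
    assume gk: "g \<in> carrier G" "k \<in> carrier G"
    have "(\<lambda>i\<in>{1..n}. one_v i \<otimes>\<^bsub>H\<^esub> P g one_v i) = one_v"
    proof (rule restrict_ext)
      fix i assume i: "i \<in> {1..n}"
      show "one_v i \<otimes>\<^bsub>H\<^esub> P g one_v i = \<one>\<^bsub>H\<^esub>" using Pone[OF gk(1) i] i by simp
    qed
    then show ?thesis unfolding sg_def W_mult by simp
  qed
  have decomp: "a \<in> E \<Longrightarrow> g \<in> carrier G \<Longrightarrow> (a, g) = (a, \<one>\<^bsub>G\<^esub>) \<otimes>\<^bsub>W\<^esub> sg g" for a g
  proof -
    assume ag: "a \<in> E" "g \<in> carrier G"
    have "(\<lambda>i\<in>{1..n}. a i \<otimes>\<^bsub>H\<^esub> P \<one>\<^bsub>G\<^esub> one_v i) = (\<lambda>i\<in>{1..n}. a i)"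
    proof (rule restrict_ext)
      fix i assume i: "i \<in> {1..n}"
      show "a i \<otimes>\<^bsub>H\<^esub> P \<one>\<^bsub>G\<^esub> one_v i = a i"
        using Pone[OF G.one_closed i] H.r_one[OF PiE_mem[OF ag(1) i]] by simp
    qed
    also have "\<dots> = a" using ag(1) by (rule PiE_restrict)
    finally have e: "(\<lambda>i\<in>{1..n}. a i \<otimes>\<^bsub>H\<^esub> P \<one>\<^bsub>G\<^esub> one_v i) = a" .
    show ?thesis unfolding sg_def W_mult e using ag(2) by simp
  qed
  have psi_mem: "g \<in> carrier G \<Longrightarrow> \<psi> g \<in> carrier G" for g
  proof -
    assume g: "g \<in> carrier G"
    have "\<phi> (sg g) \<in> carrier W" using F.hom_closed sg_mem[OF g] by blast
    then show ?thesis unfolding \<psi>_def by (auto simp: W_carrier)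
  qed
  have key: "w \<in> carrier W \<Longrightarrow> snd (\<phi> w) = \<psi> (snd w)" for w
  proof -
    assume w: "w \<in> carrier W"
    then obtain a g where ag: "w = (a, g)" "a \<in> E" "g \<in> carrier G" by (auto simp: W_carrier)
    have aB: "(a, \<one>\<^bsub>G\<^esub>) \<in> B" using ag by (simp add: wreath_base_def)
    have aW: "(a, \<one>\<^bsub>G\<^esub>) \<in> carrier W" using aB BW by blast
    have sW: "sg g \<in> carrier W" using sg_mem[OF ag(3)] .
    have "\<phi> (a, \<one>\<^bsub>G\<^esub>) \<in> B" using c1 aB by blast
    then have s1: "snd (\<phi> (a, \<one>\<^bsub>G\<^esub>)) = \<one>\<^bsub>G\<^esub>" by (auto simp: wreath_base_def)
    have "\<phi> w = \<phi> ((a, \<one>\<^bsub>G\<^esub>) \<otimes>\<^bsub>W\<^esub> sg g)" using decomp[OF ag(2,3)] ag(1) by simp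
    also have "\<dots> = \<phi> (a, \<one>\<^bsub>G\<^esub>) \<otimes>\<^bsub>W\<^esub> \<phi> (sg g)" by (rule F.hom_mult[OF aW sW])
    finally have "snd (\<phi> w) = snd (\<phi> (a, \<one>\<^bsub>G\<^esub>)) \<otimes>\<^bsub>G\<^esub> snd (\<phi> (sg g))"
      using S.hom_mult[OF F.hom_closed[OF aW] F.hom_closed[OF sW]] by simp
    also have "\<dots> = \<psi> g" unfolding s1 \<psi>_def[symmetric] by (rule G.l_one[OF psi_mem[OF ag(3)]])
    finally show ?thesis using ag by simp
  qed
  have psi_hom: "\<psi> \<in> hom G G"
  proof (rule homI)
    show "\<psi> g \<in> carrier G" if "g \<in> carrier G" for g using psi_mem that .
    show "\<psi> (g \<otimes>\<^bsub>G\<^esub> k) = \<psi> g \<otimes>\<^bsub>G\<^esub> \<psi> k" if "g \<in> carrier G" "k \<in> carrier G" for g k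
    proof -
      have "\<phi> (sg (g \<otimes>\<^bsub>G\<^esub> k)) = \<phi> (sg g) \<otimes>\<^bsub>W\<^esub> \<phi> (sg k)"
        using sg_mult[OF that, symmetric] F.hom_mult[OF sg_mem[OF that(1)] sg_mem[OF that(2)]] by simp
      then show ?thesis unfolding \<psi>_def
        using S.hom_mult[OF F.hom_closed[OF sg_mem[OF that(1)]] F.hom_closed[OF sg_mem[OF that(2)]]] by simp
    qed
  qed
  interpret Psi: group_hom G G \<psi> using psi_hom G by (simp add: group_hom_def group_hom_axioms_def)
  have "kernel G G \<psi> = {\<one>\<^bsub>G\<^esub>}"
  proof
    show "{\<one>\<^bsub>G\<^esub>} \<subseteq> kernel G G \<psi>" by (auto simp: kernel_def)
    show "kernel G G \<psi> \<subseteq> {\<one>\<^bsub>G\<^esub>}"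
    proof
      fix g assume "g \<in> kernel G G \<psi>"
      then have g: "g \<in> carrier G" "\<psi> g = \<one>\<^bsub>G\<^esub>" by (auto simp: kernel_def)
      then have "\<phi> (sg g) \<in> B" using B_kernel sg_mem by (auto simp: kernel_def \<psi>_def)
      then obtain b where b: "b \<in> B" "\<phi> (sg g) = \<phi> b" using Bsub by blast
      then have "sg g = b" using injp sg_mem[OF g(1)] BW by (meson inj_onD subsetD)
      then show "g \<in> {\<one>\<^bsub>G\<^esub>}" using b by (auto simp: sg_def wreath_base_def)
    qed
  qed
  then have psi_inj: "inj_on \<psi> (carrier G)" using Psi.inj_iff_trivial_ker by simp
  have psi_surj: "\<psi> ` carrier G = carrier G"
  proof
    show "\<psi> ` carrier G \<subseteq> carrier G" using psi_mem by blast
    show "carrier G \<subseteq> \<psi> ` carrier G"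
    proof
      fix k assume k: "k \<in> carrier G"
      then obtain w where w: "w \<in> carrier W" "sg k = \<phi> w" using sg_mem surj by (metis imageE)
      then have "\<psi> (snd w) = k" using key by (metis sg_def snd_conv)
      moreover have "snd w \<in> carrier G" using w by (auto simp: W_carrier)
      ultimately show "k \<in> \<psi> ` carrier G" by blast
    qed
  qed
  have psi_iso: "\<psi> \<in> iso G G"
    using psi_hom psi_inj psi_surj by (simp add: iso_def bij_betw_def)
  then have infG: "infinite (carrier G // twisted_conj G \<psi>)"
    using RG by (simp add: R_infty_def reidemeister_infinite_def)
  have cls: "twisted_conj G \<psi> `` {snd y} = snd ` (twisted_conj W \<phi> `` {y})" if y: "y \<in> carrier W" for y
  proof
    show "snd ` (twisted_conj W \<phi> `` {y}) \<subseteq> twisted_conj G \<psi> `` {snd y}"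
    proof
      fix g assume "g \<in> snd ` (twisted_conj W \<phi> `` {y})"
      then obtain x z where xz: "g = snd x" "x \<in> carrier W" "z \<in> carrier W"
        "y = z \<otimes>\<^bsub>W\<^esub> x \<otimes>\<^bsub>W\<^esub> inv\<^bsub>W\<^esub> (\<phi> z)"
        by (auto simp: twisted_conj_def)
      have "snd y = snd z \<otimes>\<^bsub>G\<^esub> snd x \<otimes>\<^bsub>G\<^esub> inv\<^bsub>G\<^esub> (\<psi> (snd z))"
        using xz key[OF xz(3)] by simp
      moreover have "snd z \<in> carrier G" "snd x \<in> carrier G" "snd y \<in> carrier G" using xz y by auto
      ultimately show "g \<in> twisted_conj G \<psi> `` {snd y}"
        using xz(1) by (auto simp: twisted_conj_def)
    qed
    show "twisted_conj G \<psi> `` {snd y} \<subseteq> snd ` (twisted_conj W \<phi> `` {y})"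
    proof
      fix g assume "g \<in> twisted_conj G \<psi> `` {snd y}"
      then obtain k where gk: "g \<in> carrier G" "k \<in> carrier G"
        "snd y = k \<otimes>\<^bsub>G\<^esub> g \<otimes>\<^bsub>G\<^esub> inv\<^bsub>G\<^esub> (\<psi> k)"
        by (auto simp: twisted_conj_def)
      define z where "z = sg k"
      define x where "x = inv\<^bsub>W\<^esub> z \<otimes>\<^bsub>W\<^esub> y \<otimes>\<^bsub>W\<^esub> \<phi> z"
      have z: "z \<in> carrier W" using sg_mem gk z_def by simp
      have x: "x \<in> carrier W" using z y by (simp add: x_def)
      have "z \<otimes>\<^bsub>W\<^esub> x \<otimes>\<^bsub>W\<^esub> inv\<^bsub>W\<^esub> (\<phi> z) = y"
      proof -
        have zz: "z \<otimes>\<^bsub>W\<^esub> (inv\<^bsub>W\<^esub> z \<otimes>\<^bsub>W\<^esub> y) = y"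
          using z y by (simp add: Wg.m_assoc[symmetric] Wg.r_inv)
        show ?thesis using z y zz by (simp add: x_def Wg.m_assoc)
      qed
      then have "(y, x) \<in> twisted_conj W \<phi>" using x y z by (auto simp: twisted_conj_def)
      moreover have "snd x = g"
      proof -
        have pk: "\<psi> k \<in> carrier G" using psi_mem gk by simp
        have "snd x = inv\<^bsub>G\<^esub> k \<otimes>\<^bsub>G\<^esub> snd y \<otimes>\<^bsub>G\<^esub> \<psi> k"
          using z y by (simp add: x_def \<psi>_def z_def) (simp add: sg_def)
        also have "\<dots> = g" using gk pk by (simp add: G.m_assoc G.inv_solve_left')
        finally show ?thesis .
      qed
      ultimately show "g \<in> snd ` (twisted_conj W \<phi> `` {y})" by force
    qed
  qed
  have "carrier G // twisted_conj G \<psi> = (\<lambda>C. snd ` C) ` (carrier W // twisted_conj W \<phi>)"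
  proof -
    have "carrier G // twisted_conj G \<psi> = (\<Union>g\<in>snd ` carrier W. {twisted_conj G \<psi> `` {g}})"
      by (simp add: quotient_def snd_surj)
    also have "\<dots> = (\<Union>y\<in>carrier W. {snd ` (twisted_conj W \<phi> `` {y})})"
      using cls by auto
    also have "\<dots> = (\<lambda>C. snd ` C) ` (carrier W // twisted_conj W \<phi>)"
      by (auto simp: quotient_def)
    finally show ?thesis .
  qed
  then show ?thesis using infG by (auto simp: reidemeister_infinite_def)
qed

end

theorem theorem3p13:
  fixes H :: "('h, 'm) monoid_scheme" and G :: "('g, 'k) monoid_scheme"
    and n :: nat and \<sigma> :: "'g \<Rightarrow> nat \<Rightarrow> nat"
  assumes "n \<ge> 3"
    and "comm_group H" and "fin_gen_group H" and "carrier H \<noteq> {\<one>\<^bsub>H\<^esub>}"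
    and "group G"
    and "\<sigma> \<in> hom G (sym_group n)" and "\<sigma> ` carrier G = carrier (sym_group n)"
    and "\<forall>N. N \<lhd> wreath H G n \<sigma> \<and>
             (\<forall>x\<in>N. \<forall>y\<in>N. x \<otimes>\<^bsub>wreath H G n \<sigma>\<^esub> y = y \<otimes>\<^bsub>wreath H G n \<sigma>\<^esub> x)
           \<longrightarrow> N \<subseteq> wreath_base H G n"
    and "R_infty G"
  shows "R_infty (wreath H G n \<sigma>)"
proof -
  interpret wr H G n \<sigma> using assms by (simp add: wr_def)
  show ?thesis using main[OF assms(8) _ assms(9)] by (simp add: R_infty_def)
qed

end
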